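(* Let $R$ be an affine algebra over a field $K$ with no zero divisors, and let $\overline{V}_1\subseteq V_1\subseteq\overline{V}_2\subseteq V_2\subseteq\cdots\subseteq R$ be finite-dimensional $K$-subspaces such that (a) for every $r\in R$, $\lim_{n}\dim_K(V_nr+V_n)/\dim_K(V_n)=1$; (b) $\lim_n\dim_K(\overline{V}_n)/\dim_K(V_n)=1$; (c) for every finite-dimensional subspace $Z\subseteq R$ there is $k$ with $\overline{V}_n+\overline{V}_nZ\subseteq V_n$ for all $n>k$. Let $\{e_i\}_{i\ge1}$ be a basis of $R$ such that for each $i$, if $\dim_K\overline{V}_i=k_i$ and $\dim_K V_i=l_i$, then $e_1,\dots,e_{k_i}$ is a basis of $\overline{V}_i$ and $e_1,\dots,e_{l_i}$ is a basis of $V_i$. For $0\neq s\in R$ and $k\ge1$ let $$F_k(s)=\{e_j\in V_k: e_js\notin V_k\},\qquad B_k(s)=\{e_j\notin V_k: e_js\in V_k\}.$$ Then $$\lim_{k\to\infty}\frac{|F_k(s)|}{\dim_K(V_k)}=0\quad\text{and}\quad\lim_{k\to\infty}\frac{|B_k(s)|}{\dim_K(V_k)}=0.$$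
   Context: An affine algebra is a finitely generated associative algebra over $K$, not necessarily unital. For subspaces $V,Z$, $VZ$ is the $K$-span of products $vz$. *)

theory Defs
  imports Complex_Main
begin

text \<open>A (not necessarily unital) associative K-algebra R: the carrier is a type 'r of class
  ring (associative, distributive, no unit required), with a K-vector-space structure given
  by a scalar multiplication sc, compatible with the ring multiplication.\<close>

definition is_K_algebra :: "('k::field \<Rightarrow> 'r::ring \<Rightarrow> 'r) \<Rightarrow> bool" where
  "is_K_algebra sc \<longleftrightarrow> vector_space sc \<and>
     (\<forall>a x y. sc a (x * y) = sc a x * y \<and> sc a (x * y) = x * sc a y)"

definition gen_subalgebra :: "('k::field \<Rightarrow> 'r::ring \<Rightarrow> 'r) \<Rightarrow> 'r set \<Rightarrow> 'r set" where
  "gen_subalgebra sc S = module.span sc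
     {foldr (*) xs x | x xs. x \<in> S \<and> set xs \<subseteq> S}"

definition affine_algebra :: "('k::field \<Rightarrow> 'r::ring \<Rightarrow> 'r) \<Rightarrow> bool" where
  "affine_algebra sc \<longleftrightarrow> is_K_algebra sc \<and>
     (\<exists>S. finite S \<and> gen_subalgebra sc S = UNIV)"

definition no_zero_divisors_ring :: "'r::ring itself \<Rightarrow> bool" where
  "no_zero_divisors_ring _ \<longleftrightarrow> (\<forall>x y::'r. x \<noteq> 0 \<longrightarrow> y \<noteq> 0 \<longrightarrow> x * y \<noteq> 0)"

definition fin_dim_subspace :: "('k::field \<Rightarrow> 'r::ring \<Rightarrow> 'r) \<Rightarrow> 'r set \<Rightarrow> bool" where
  "fin_dim_subspace sc V \<longleftrightarrow> module.subspace sc V \<and> (\<exists>B. finite B \<and> module.span sc B = V)"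

definition sub_prod :: "('k::field \<Rightarrow> 'r::ring \<Rightarrow> 'r) \<Rightarrow> 'r set \<Rightarrow> 'r set \<Rightarrow> 'r set" where
  "sub_prod sc V Z = module.span sc {v * z | v z. v \<in> V \<and> z \<in> Z}"

definition sub_sum :: "('k::field \<Rightarrow> 'r::ring \<Rightarrow> 'r) \<Rightarrow> 'r set \<Rightarrow> 'r set \<Rightarrow> 'r set" where
  "sub_sum sc V W = module.span sc (V \<union> W)"

definition Fset :: "(nat \<Rightarrow> 'r::ring) \<Rightarrow> 'r set \<Rightarrow> 'r \<Rightarrow> 'r set" where
  "Fset e Vk s = {x \<in> range e. x \<in> Vk \<and> x * s \<notin> Vk}"

definition Bset :: "(nat \<Rightarrow> 'r::ring) \<Rightarrow> 'r set \<Rightarrow> 'r \<Rightarrow> 'r set" where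
  "Bset e Vk s = {x \<in> range e. x \<notin> Vk \<and> x * s \<in> Vk}"

end

theory Submission
  imports Defs
begin

theorem lemma4:
  fixes sc :: "'k::field \<Rightarrow> 'r::ring \<Rightarrow> 'r"
    and Vb V :: "nat \<Rightarrow> 'r set"
    and e :: "nat \<Rightarrow> 'r"
    and s :: 'r
  assumes alg: "affine_algebra sc"
    and nzd: "no_zero_divisors_ring TYPE('r)"
    and fd: "\<And>n. fin_dim_subspace sc (Vb n) \<and> fin_dim_subspace sc (V n)"
    and chain: "\<And>n. Vb n \<subseteq> V n \<and> V n \<subseteq> Vb (Suc n)"
    and cond_a: "\<And>r. (\<lambda>n. real (vector_space.dim sc (sub_sum sc (sub_prod sc (V n) {r}) (V n)))
                          / real (vector_space.dim sc (V n))) \<longlonglongrightarrow> 1"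
    and cond_b: "(\<lambda>n. real (vector_space.dim sc (Vb n)) / real (vector_space.dim sc (V n))) \<longlonglongrightarrow> 1"
    and cond_c: "\<And>Z. fin_dim_subspace sc Z \<Longrightarrow>
                   \<exists>k. \<forall>n>k. sub_sum sc (Vb n) (sub_prod sc (Vb n) Z) \<subseteq> V n"
    and e_inj: "inj e"
    and e_indep: "\<not> module.dependent sc (range e)"
    and e_span: "module.span sc (range e) = UNIV"
    and e_Vb: "\<And>i. module.span sc (e ` {..<vector_space.dim sc (Vb i)}) = Vb i"
    and e_V: "\<And>i. module.span sc (e ` {..<vector_space.dim sc (V i)}) = V i"
    and s_nz: "s \<noteq> 0"
  shows "(\<lambda>k. real (card (Fset e (V k) s)) / real (vector_space.dim sc (V k))) \<longlonglongrightarrow> 0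
       \<and> (\<lambda>k. real (card (Bset e (V k) s)) / real (vector_space.dim sc (V k))) \<longlonglongrightarrow> 0"
proof -
  have vsa: "vector_space sc" using alg unfolding affine_algebra_def is_K_algebra_def by blast
  have scm: "\<And>a x y. sc a (x * y) = sc a x * y" using alg unfolding affine_algebra_def is_K_algebra_def by blast
  interpret vs: vector_space sc by (rule vsa)
  have memW: "e j \<in> W \<longleftrightarrow> j < d" if W: "vs.span (e ` {..<d}) = W" for W d j
  proof
    assume "j < d" then have "e j \<in> e ` {..<d}" by blast
    then show "e j \<in> W" using W vs.span_base by metis
  next
    assume ej: "e j \<in> W"
    show "j < d"
    proof (rule ccontr)
      assume "\<not> j < d"
      then have "e ` {..<d} \<subseteq> range e - {e j}" using e_inj by (auto dest: injD)
      then have "vs.span (e ` {..<d}) \<subseteq> vs.span (range e - {e j})" by (rule vs.span_mono)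
      then have "e j \<in> vs.span (range e - {e j})" using ej W by (simp add: subset_iff)
      then have "vs.dependent (range e)" unfolding vs.dependent_def using rangeI[of e j] by blast
      then show False using e_indep by simp
    qed
  qed
  have memV: "e j \<in> V i \<longleftrightarrow> j < vs.dim (V i)" for i j using memW[OF e_V] .
  have memVb: "e j \<in> Vb i \<longleftrightarrow> j < vs.dim (Vb i)" for i j using memW[OF e_Vb] .
  have dle: "vs.dim (Vb i) \<le> vs.dim (V i)" for i
  proof (rule ccontr)
    assume "\<not> ?thesis"
    then have "e (vs.dim (V i)) \<in> Vb i" using memVb by simp
    then show False using chain memV by blast
  qed
  have fdZ: "fin_dim_subspace sc (vs.span {s})"
    unfolding fin_dim_subspace_def using vs.subspace_span by blast
  obtain k0 where k0: "\<And>n. n > k0 \<Longrightarrow> sub_sum sc (Vb n) (sub_prod sc (Vb n) (vs.span {s})) \<subseteq> V n"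
    using cond_c[OF fdZ] by blast
  have prodV: "x * s \<in> V n" if "n > k0" "x \<in> Vb n" for x n
  proof -
    have "x * s \<in> sub_prod sc (Vb n) (vs.span {s})"
      unfolding sub_prod_def using that(2) vs.span_base[of s "{s}"]
      by (intro vs.span_base) blast
    then have "x * s \<in> sub_sum sc (Vb n) (sub_prod sc (Vb n) (vs.span {s}))"
      unfolding sub_sum_def by (intro vs.span_base) blast
    then show ?thesis using k0 that(1) by blast
  qed
  define g where "g k = 1 - real (vs.dim (Vb k)) / real (vs.dim (V k))" for k
  have g0: "g \<longlonglongrightarrow> 0" unfolding g_def using tendsto_diff[OF tendsto_const cond_b, of 1] by simp
  have bound: "real c / real (vs.dim (V k)) \<le> g k"
    if "c + vs.dim (Vb k) \<le> vs.dim (V k)" for c k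
  proof (cases "vs.dim (V k) = 0")
    case True then show ?thesis by (simp add: g_def)
  next
    case False
    then have "real c \<le> real (vs.dim (V k)) - real (vs.dim (Vb k))" using that by simp
    then show ?thesis using False by (simp add: g_def field_simps)
  qed
  have Fb: "card (Fset e (V k) s) + vs.dim (Vb k) \<le> vs.dim (V k)" if "k > k0" for k
  proof -
    have "Fset e (V k) s \<subseteq> e ` {vs.dim (Vb k)..<vs.dim (V k)}"
    proof
      fix x assume "x \<in> Fset e (V k) s"
      then obtain j where x: "x = e j" "e j \<in> V k" "e j * s \<notin> V k" unfolding Fset_def by blast
      then have "e j \<notin> Vb k" using prodV that by blast
      then show "x \<in> e ` {vs.dim (Vb k)..<vs.dim (V k)}" using x memV memVb by auto
    qed
    then have "card (Fset e (V k) s) \<le> card (e ` {vs.dim (Vb k)..<vs.dim (V k)})"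
      by (intro card_mono) auto
    also have "\<dots> \<le> vs.dim (V k) - vs.dim (Vb k)" using card_image_le[of "{vs.dim (Vb k)..<vs.dim (V k)}" e] by simp
    finally show ?thesis using dle[of k] by simp
  qed
  have mh: "module_hom sc sc (\<lambda>x. x * s)"
    unfolding module_hom_def module_hom_axioms_def module_iff_vector_space
    using vsa scm by (simp add: distrib_right)
  have injs: "inj (\<lambda>x. x * s)"
  proof (rule injI)
    fix x y assume "x * s = y * s"
    then have "(x - y) * s = 0" by (simp add: left_diff_distrib)
    then show "x = y" using nzd s_nz unfolding no_zero_divisors_ring_def by (metis right_minus_eq)
  qed
  have Bb: "card (Bset e (V k) s) + vs.dim (Vb k) \<le> vs.dim (V k)" if "k > k0" for k
  proof (cases "finite (Bset e (V k) s)")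
    case False then show ?thesis using dle[of k] by simp
  next
    case True
    define A where "A = e ` {..<vs.dim (Vb k)} \<union> Bset e (V k) s"
    have disj: "e ` {..<vs.dim (Vb k)} \<inter> Bset e (V k) s = {}"
    proof -
      have "e ` {..<vs.dim (Vb k)} \<subseteq> V k"
      proof
        fix x assume "x \<in> e ` {..<vs.dim (Vb k)}"
        then obtain j where "x = e j" "j < vs.dim (Vb k)" by blast
        then have "x \<in> Vb k" using memVb by blast
        then show "x \<in> V k" using chain[of k] by blast
      qed
      then show ?thesis unfolding Bset_def by blast
    qed
    have ce: "card (e ` {..<d}) = d" for d
      using card_image[OF inj_on_subset[OF e_inj subset_UNIV], of "{..<d}"] by simp
    have "card A = card (e ` {..<vs.dim (Vb k)}) + card (Bset e (V k) s)"
      unfolding A_def by (rule card_Un_disjoint[OF _ True disj]) simp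
    then have cardA: "card A = vs.dim (Vb k) + card (Bset e (V k) s)"
      using ce by simp
    have "A \<subseteq> range e" unfolding A_def Bset_def by blast
    then have indA: "vs.independent A"
      by (rule vs.independent_mono[OF e_indep])
    have indfA: "vs.independent ((\<lambda>x. x * s) ` A)"
      by (rule module_hom.independent_injective_image[OF mh indA inj_on_subset[OF injs subset_UNIV]])
    have subV: "(\<lambda>x. x * s) ` A \<subseteq> V k"
    proof
      fix y assume "y \<in> (\<lambda>x. x * s) ` A"
      then obtain x where x: "x \<in> A" "y = x * s" by blast
      show "y \<in> V k"
      proof (cases "x \<in> Bset e (V k) s")
        case True then show ?thesis using x(2) unfolding Bset_def by blast
      next
        case False
        then obtain j where "x = e j" "j < vs.dim (Vb k)" using x(1) unfolding A_def by blast
        then have "x \<in> Vb k" using memVb by blast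
        then show ?thesis using x(2) prodV[OF that] by blast
      qed
    qed
    have sub: "(\<lambda>x. x * s) ` A \<subseteq> vs.span (e ` {..<vs.dim (V k)})"
      using subV e_V[of k] by simp
    have finT: "finite (e ` {..<vs.dim (V k)})" by simp
    have "card ((\<lambda>x. x * s) ` A) \<le> card (e ` {..<vs.dim (V k)})"
      using vs.independent_span_bound[OF finT indfA sub] by (rule conjunct2)
    also have "\<dots> = vs.dim (V k)" using card_image[OF inj_on_subset[OF e_inj subset_UNIV]] by simp
    finally have c1: "card ((\<lambda>x. x * s) ` A) \<le> vs.dim (V k)" .
    have "card ((\<lambda>x. x * s) ` A) = card A" by (rule card_image[OF inj_on_subset[OF injs subset_UNIV]])
    then show ?thesis using cardA c1 by linarith
  qed
  show ?thesis
  proof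
    show "(\<lambda>k. real (card (Fset e (V k) s)) / real (vs.dim (V k))) \<longlonglongrightarrow> 0"
    proof (rule tendsto_sandwich[OF _ _ tendsto_const g0])
      show "\<forall>\<^sub>F n in sequentially. 0 \<le> real (card (Fset e (V n) s)) / real (vs.dim (V n))" by simp
      show "\<forall>\<^sub>F n in sequentially. real (card (Fset e (V n) s)) / real (vs.dim (V n)) \<le> g n"
        using eventually_gt_at_top[of k0] by eventually_elim (rule bound[OF Fb])
    qed
    show "(\<lambda>k. real (card (Bset e (V k) s)) / real (vs.dim (V k))) \<longlonglongrightarrow> 0"
    proof (rule tendsto_sandwich[OF _ _ tendsto_const g0])
      show "\<forall>\<^sub>F n in sequentially. 0 \<le> real (card (Bset e (V n) s)) / real (vs.dim (V n))" by simp
      show "\<forall>\<^sub>F n in sequentially. real (card (Bset e (V n) s)) / real (vs.dim (V n)) \<le> g n"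
        using eventually_gt_at_top[of k0] by eventually_elim (rule bound[OF Bb])
    qed
  qed
qed

end
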